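(* Assume $\rho_\alpha^{\mathrm{dir}}<1$ and fix $\varepsilon>0$ such that $\beta_\varepsilon:=\rho_\alpha^{\mathrm{dir}}+\varepsilon<1$. For integers $t\ge 0$ and $x\in\mathbb R^m$ define \[ V_\varepsilon^t(x):=\sum_{\ell=0}^{t}\beta_\varepsilon^{-2\ell}\max_{\pi_1,\dots,\pi_\ell\in\Theta}\big\|A_{\pi_\ell}\cdots A_{\pi_1}x\big\|_2^2, \] where the $\ell=0$ term is $\|x\|_2^2$, and $V_\varepsilon^\infty(x):=\lim_{t\to\infty}V_\varepsilon^t(x)$. Then the following hold. (i) $V_\varepsilon^\infty$ is well defined, and there exists $C_\varepsilon\ge 1$ such that $\|x\|_2^2\le V_\varepsilon^\infty(x)\le C_\varepsilon\|x\|_2^2$ for all $x\in\mathbb R^m$. (ii) $p_\varepsilon(x):=\sqrt{V_\varepsilon^\infty(x)}$ is a norm on $\mathbb R^m$. (iii) For every stochastic policy $\mu$ and every $x\in\mathbb R^m$, \[ V_\varepsilon^\infty(A_\mu x)\le \beta_\varepsilon^2\big(V_\varepsilon^\infty(x)-\|x\|_2^2\big)\le \beta_\varepsilon^2 V_\varepsilon^\infty(x). \] Consequently $p_\varepsilon(A_\mu x)\le\beta_\varepsilon p_\varepsilon(x)$ for all $x\in\mathbb R^m$. (iv) $T_\alpha$ is a global contraction in $p_\varepsilon$: $p_\varepsilon(T_\alpha(\theta)-T_\alpha(\bar\theta))\le\beta_\varepsilon p_\varepsilon(\theta-\bar\theta)$ for all $\theta,\bar\theta\in\mathbb R^m$.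 (v) Hence there exists a unique projected Bellman fixed point $\theta^\star$, that is, a unique $\theta^\star$ with $g(\theta^\star)=0$. (vi) For the deterministic recursion $\theta_{k+1}=T_\alpha(\theta_k)$, $k\ge 0$, started from any $\theta_0\in\mathbb R^m$, we have \[ V_\varepsilon^\infty(\theta_k-\theta^\star)\le\beta_\varepsilon^{2k}V_\varepsilon^\infty(\theta_0-\theta^\star), \] \[ \|\theta_k-\theta^\star\|_2\le\sqrt{C_\varepsilon}\,\beta_\varepsilon^k\|\theta_0-\theta^\star\|_2, \] \[ \|\Phi\theta_k-\Phi\theta^\star\|_2\le\|\Phi\|_2\sqrt{C_\varepsilon}\,\beta_\varepsilon^k\|\theta_0-\theta^\star\|_2. \]
   Context: Consider a finite discounted MDP with state space $\mathcal S=\{1,\dots,|\mathcal S|\}$, action space $\mathcal A=\{1,\dots,|\mathcal A|\}$, transition probabilities $P(s'\mid s,a)$, real rewards $r(s,a,s')$, expected reward $R(s,a)=\sum_{s'}P(s'\mid s,a)r(s,a,s')$, and discount factor $\gamma\in(0,1)$. State-action vectors are ordered as $(1,1),(2,1),\dots,(|\mathcal S|,1),(1,2),\dots,(|\mathcal S|,|\mathcal A|)$. The matrix $P\in\mathbb R^{|\mathcal S||\mathcal A|\times|\mathcal S|}$ has row $(s,a)$ equal to $P(\cdot\mid s,a)$, and $R\in\mathbb R^{|\mathcal S||\mathcal A|}$ has entries $R(s,a)$. A stochastic policy is a map $\mu:\mathcal S\to\Delta_{|\mathcal A|}$, where $\Delta_n$ is the probability simplex in $\mathbb R^n$. The set $\Theta$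 is the finite set of deterministic stationary policies $\pi:\mathcal S\to\mathcal A$; each is identified with the stochastic policy putting mass $1$ on $\pi(s)$. For a stochastic policy $\mu$, $\Pi^\mu\in\mathbb R^{|\mathcal S|\times|\mathcal S||\mathcal A|}$ is the matrix with entry $\mu(a\mid s)$ in row $s$ and column $(s,a)$, and zeros elsewhere. The feature matrix $\Phi\in\mathbb R^{|\mathcal S||\mathcal A|\times m}$ has full column rank and rows $\phi(s,a)^\top$. For $\theta\in\mathbb R^m$, $V_\theta\in\mathbb R^{|\mathcal S|}$ is defined by $V_\theta(s)=\max_{a}\phi(s,a)^\top\theta$. The sampling distribution $d$ on $\mathcal S\times\mathcal A$ satisfies $d(s,a)>0$ for all $(s,a)$, and $D=\mathrm{diag}(d(s,a))$ in the same ordering. The step size is $\alpha\in(0,1)$. Define the projected Bellman residual $g(\theta):=\Phi^\top D(R+\gamma PV_\theta-\Phi\theta)$ and the map $T_\alpha(\theta):=\theta+\alpha g(\theta)$. A projected Bellman fixed point is a $\theta^\star$ with $g(\theta^\star)=0$. For a stochastic policy $\mu$, define $A_\mu:=I-\alpha\Phi^\top D\Phi+\alpha\gamma\Phi^\top DP\Pi^\mu\Phi\in\mathbb R^{m\times m}$, and let $\mathcal A_\alpha:=\{A_\pi:\pi\in\Theta\}$. The joint spectral radius of a bounded set $\mathcal H$ of square matrices is $\mathrm{JSR}(\mathcal H):=\lim_{k\to\infty}\sup_{B_1,\dots,B_k\in\mathcal H}\|B_k\cdots B_1\|^{1/k}$. Set $\rho_\alpha^{\mathrm{dir}}:=\mathrm{JSR}(\mathcal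 A_\alpha)$. *)

theory Defs
  imports "HOL-Analysis.Analysis"
begin

(* State-action pairs are the finite type ('s \<times> 'a); the paper's particular
   ordering of state-action vectors is immaterial for type-indexed vectors. *)

definition Rvec :: "('s::finite \<Rightarrow> 'a::finite \<Rightarrow> 's \<Rightarrow> real) \<Rightarrow> ('s \<Rightarrow> 'a \<Rightarrow> 's \<Rightarrow> real) \<Rightarrow> real^('s \<times> 'a)"
  where "Rvec P r = (\<chi> sa. \<Sum>s'\<in>UNIV. P (fst sa) (snd sa) s' * r (fst sa) (snd sa) s')"

definition Pmat :: "('s::finite \<Rightarrow> 'a::finite \<Rightarrow> 's \<Rightarrow> real) \<Rightarrow> real^'s^('s \<times> 'a)"
  where "Pmat P = (\<chi> sa s'. P (fst sa) (snd sa) s')"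

definition Dmat :: "('s::finite \<times> 'a::finite \<Rightarrow> real) \<Rightarrow> real^('s \<times> 'a)^('s \<times> 'a)"
  where "Dmat d = (\<chi> i j. if i = j then d i else 0)"

definition Vtheta :: "real^'m::finite^('s::finite \<times> 'a::finite) \<Rightarrow> real^'m \<Rightarrow> real^'s"
  where "Vtheta Phi \<theta> = (\<chi> s. Max ((\<lambda>a. (Phi $ (s, a)) \<bullet> \<theta>) ` UNIV))"

definition gres :: "('s::finite \<Rightarrow> 'a::finite \<Rightarrow> 's \<Rightarrow> real) \<Rightarrow> ('s \<Rightarrow> 'a \<Rightarrow> 's \<Rightarrow> real) \<Rightarrow> real
    \<Rightarrow> real^'m::finite^('s \<times> 'a) \<Rightarrow> ('s \<times> 'a \<Rightarrow> real) \<Rightarrow> real^'m \<Rightarrow> real^'m"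
  where "gres P r \<gamma> Phi d \<theta> =
    transpose Phi *v (Dmat d *v (Rvec P r + \<gamma> *\<^sub>R (Pmat P *v Vtheta Phi \<theta>) - Phi *v \<theta>))"

definition Talpha :: "('s::finite \<Rightarrow> 'a::finite \<Rightarrow> 's \<Rightarrow> real) \<Rightarrow> ('s \<Rightarrow> 'a \<Rightarrow> 's \<Rightarrow> real) \<Rightarrow> real
    \<Rightarrow> real^'m::finite^('s \<times> 'a) \<Rightarrow> ('s \<times> 'a \<Rightarrow> real) \<Rightarrow> real \<Rightarrow> real^'m \<Rightarrow> real^'m"
  where "Talpha P r \<gamma> Phi d \<alpha> \<theta> = \<theta> + \<alpha> *\<^sub>R gres P r \<gamma> Phi d \<theta>"

(* stochastic policy mu: mu s a = mu(a|s) *)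
definition stoch_policy :: "('s \<Rightarrow> 'a::finite \<Rightarrow> real) \<Rightarrow> bool"
  where "stoch_policy \<mu> \<longleftrightarrow> (\<forall>s a. 0 \<le> \<mu> s a) \<and> (\<forall>s. (\<Sum>a\<in>UNIV. \<mu> s a) = 1)"

definition det_policy :: "('s \<Rightarrow> 'a) \<Rightarrow> 's \<Rightarrow> 'a \<Rightarrow> real"
  where "det_policy \<pi> = (\<lambda>s a. if a = \<pi> s then 1 else 0)"

definition Pimat :: "('s::finite \<Rightarrow> 'a::finite \<Rightarrow> real) \<Rightarrow> real^('s \<times> 'a)^'s"
  where "Pimat \<mu> = (\<chi> s sa. if fst sa = s then \<mu> s (snd sa) else 0)"

definition Amat :: "('s::finite \<Rightarrow> 'a::finite \<Rightarrow> 's \<Rightarrow> real) \<Rightarrow> real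
    \<Rightarrow> real^'m::finite^('s \<times> 'a) \<Rightarrow> ('s \<times> 'a \<Rightarrow> real) \<Rightarrow> real \<Rightarrow> ('s \<Rightarrow> 'a \<Rightarrow> real) \<Rightarrow> real^'m^'m"
  where "Amat P \<gamma> Phi d \<alpha> \<mu> =
    mat 1 - \<alpha> *\<^sub>R (transpose Phi ** Dmat d ** Phi)
          + (\<alpha> * \<gamma>) *\<^sub>R (transpose Phi ** Dmat d ** Pmat P ** Pimat \<mu> ** Phi)"

definition Aset :: "('s::finite \<Rightarrow> 'a::finite \<Rightarrow> 's \<Rightarrow> real) \<Rightarrow> real
    \<Rightarrow> real^'m::finite^('s \<times> 'a) \<Rightarrow> ('s \<times> 'a \<Rightarrow> real) \<Rightarrow> real \<Rightarrow> (real^'m^'m) set"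
  where "Aset P \<gamma> Phi d \<alpha> = (\<lambda>\<pi>. Amat P \<gamma> Phi d \<alpha> (det_policy \<pi>)) ` (UNIV :: ('s \<Rightarrow> 'a) set)"

(* product of a list [B_1, ..., B_k] in the order B_k ** ... ** B_1 *)
definition mprod :: "(real^'n::finite^'n) list \<Rightarrow> real^'n^'n"
  where "mprod Bs = foldl (\<lambda>acc B. B ** acc) (mat 1) Bs"

(* joint spectral radius, with the operator norm induced by the Euclidean norm *)
definition JSR :: "(real^'n::finite^'n) set \<Rightarrow> real"
  where "JSR H = lim (\<lambda>k. SUP Bs \<in> {Bs. set Bs \<subseteq> H \<and> length Bs = k}.
                           root k (onorm (\<lambda>x. mprod Bs *v x)))"

definition Vt :: "('s::finite \<Rightarrow> 'a::finite \<Rightarrow> 's \<Rightarrow> real) \<Rightarrow> real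
    \<Rightarrow> real^'m::finite^('s \<times> 'a) \<Rightarrow> ('s \<times> 'a \<Rightarrow> real) \<Rightarrow> real \<Rightarrow> real \<Rightarrow> nat \<Rightarrow> real^'m \<Rightarrow> real"
  where "Vt P \<gamma> Phi d \<alpha> \<beta> t x =
    (\<Sum>l\<le>t. inverse \<beta> ^ (2 * l) *
       Max ((\<lambda>\<pi>s. (norm (mprod (map (\<lambda>\<pi>. Amat P \<gamma> Phi d \<alpha> (det_policy \<pi>)) \<pi>s) *v x))\<^sup>2)
            ` {\<pi>s :: ('s \<Rightarrow> 'a) list. length \<pi>s = l}))"

definition Vinf :: "('s::finite \<Rightarrow> 'a::finite \<Rightarrow> 's \<Rightarrow> real) \<Rightarrow> real
    \<Rightarrow> real^'m::finite^('s \<times> 'a) \<Rightarrow> ('s \<times> 'a \<Rightarrow> real) \<Rightarrow> real \<Rightarrow> real \<Rightarrow> real^'m \<Rightarrow> real"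
  where "Vinf P \<gamma> Phi d \<alpha> \<beta> x = lim (\<lambda>t. Vt P \<gamma> Phi d \<alpha> \<beta> t x)"

definition is_norm :: "('v::real_vector \<Rightarrow> real) \<Rightarrow> bool"
  where "is_norm p \<longleftrightarrow> (\<forall>x. 0 \<le> p x) \<and> (\<forall>x. p x = 0 \<longleftrightarrow> x = 0)
     \<and> (\<forall>c x. p (c *\<^sub>R x) = \<bar>c\<bar> * p x) \<and> (\<forall>x y. p (x + y) \<le> p x + p y)"

end

theory Submission
  imports Defs
begin


lemma foldl_mprod: "foldl (\<lambda>acc B. B ** acc) C Bs = mprod Bs ** (C::real^'n::finite^'n)"
proof (induction Bs arbitrary: C)
  case Nil thus ?case by (simp add: mprod_def matrix_mul_lid)
next
  case (Cons B Bs)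
  have "foldl (\<lambda>acc B. B ** acc) C (B # Bs) = mprod Bs ** (B ** C)" using Cons by simp
  also have "\<dots> = (mprod Bs ** B) ** C" by (simp add: matrix_mul_assoc)
  also have "mprod Bs ** B = mprod (B # Bs)" using Cons[of "B ** mat 1"] by (simp add: mprod_def matrix_mul_rid)
  finally show ?case .
qed

lemma mprod_Nil[simp]: "mprod [] = mat 1" by (simp add: mprod_def)
lemma mprod_Cons: "mprod (B # Bs) = mprod Bs ** B"
  using foldl_mprod[of "B ** mat 1" Bs] by (simp add: mprod_def matrix_mul_rid)
lemma mprod_append: "mprod (Bs @ Cs) = mprod Cs ** mprod Bs"
  by (simp add: mprod_def foldl_mprod[of "foldl _ (mat 1) Bs"])

lemma mv_sum: "finite S \<Longrightarrow> (M::real^'n::finite^'k::finite) *v (\<Sum>i\<in>S. v i) = (\<Sum>i\<in>S. M *v v i)"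
  by (induction S rule: finite_induct) (auto simp: matrix_vector_right_distrib)

definition Ql :: "('p::finite \<Rightarrow> real^'m::finite^'m) \<Rightarrow> nat \<Rightarrow> real^'m \<Rightarrow> real" where
  "Ql A l x = Max ((\<lambda>\<pi>s. (norm (mprod (map A \<pi>s) *v x))\<^sup>2) ` {\<pi>s :: 'p list. length \<pi>s = l})"

lemma lists_fin: "finite {\<pi>s :: 'p::finite list. length \<pi>s = l}"
  using finite_lists_length_eq[of "UNIV::'p set" l] by simp
lemma lists_ne: "{\<pi>s :: 'p::finite list. length \<pi>s = l} \<noteq> {}"
  by (auto intro!: exI[of _ "replicate l undefined"])

lemma Ql_ge: "length \<pi>s = l \<Longrightarrow> (norm (mprod (map A \<pi>s) *v x))\<^sup>2 \<le> Ql A l x"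
  unfolding Ql_def by (rule Max_ge) (use lists_fin in auto)

lemma Ql_attain: "\<exists>\<pi>s. length \<pi>s = l \<and> Ql A l x = (norm (mprod (map A \<pi>s) *v x))\<^sup>2"
proof -
  have "Ql A l x \<in> (\<lambda>\<pi>s. (norm (mprod (map A \<pi>s) *v x))\<^sup>2) ` {\<pi>s. length \<pi>s = l}"
    unfolding Ql_def by (rule Max_in) (use lists_fin lists_ne in auto)
  thus ?thesis by auto
qed

lemma Ql_nonneg: "0 \<le> Ql A l x"
  using Ql_attain[of l A x] by auto

lemma Ql_0: "Ql A 0 x = (norm x)\<^sup>2"
  using Ql_attain[of 0 A x] by (auto simp: matrix_vector_mul_lid)

lemma Ql_le_iff: "Ql A l x \<le> c \<longleftrightarrow> (\<forall>\<pi>s. length \<pi>s = l \<longrightarrow> (norm (mprod (map A \<pi>s) *v x))\<^sup>2 \<le> c)"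
  using Ql_attain[of l A x] Ql_ge[of _ l A x] by (metis order_trans)

lemma Ql_scale: "Ql A l (c *\<^sub>R x) = c\<^sup>2 * Ql A l x"
proof -
  have "Ql A l (c *\<^sub>R x) = Max ((\<lambda>y. c\<^sup>2 * y) ` (\<lambda>\<pi>s. (norm (mprod (map A \<pi>s) *v x))\<^sup>2) ` {\<pi>s. length \<pi>s = l})"
    unfolding Ql_def image_image
    by (simp add: matrix_vector_mult_scaleR power_mult_distrib)
  also have "\<dots> = c\<^sup>2 * Ql A l x" unfolding Ql_def
    by (rule mono_Max_commute[symmetric]) (use lists_fin lists_ne in \<open>auto simp: mono_def mult_left_mono\<close>)
  finally show ?thesis .
qed

lemma Ql_zero: "Ql A l 0 = 0"
  using Ql_scale[of A l 0 0] by simp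

lemma Ql_triangle: "sqrt (Ql A l (x + y)) \<le> sqrt (Ql A l x) + sqrt (Ql A l y)"
proof -
  obtain \<pi>s where \<pi>s: "length \<pi>s = l" "Ql A l (x+y) = (norm (mprod (map A \<pi>s) *v (x+y)))\<^sup>2"
    using Ql_attain by blast
  let ?M = "mprod (map A \<pi>s)"
  have "sqrt (Ql A l (x+y)) = norm (?M *v x + ?M *v y)" using \<pi>s by (simp add: matrix_vector_right_distrib)
  also have "\<dots> \<le> norm (?M *v x) + norm (?M *v y)" by (rule norm_triangle_ineq)
  also have "norm (?M *v x) \<le> sqrt (Ql A l x)"
    using real_sqrt_le_mono[OF Ql_ge[OF \<pi>s(1), of A x]] by simp
  also have "norm (?M *v y) \<le> sqrt (Ql A l y)"
    using real_sqrt_le_mono[OF Ql_ge[OF \<pi>s(1), of A y]] by simp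
  finally show ?thesis by simp
qed

lemma Ql_step:
  fixes w :: "'p::finite \<Rightarrow> real"
  assumes "\<forall>\<pi>. 0 \<le> w \<pi>" "(\<Sum>\<pi>\<in>UNIV. w \<pi>) = 1"
    and Bx: "Bx = (\<Sum>\<pi>\<in>UNIV. w \<pi> *\<^sub>R (A \<pi> *v x))"
  shows "Ql A l Bx \<le> Ql A (Suc l) x"
  unfolding Ql_le_iff[of A l Bx]
proof (intro allI impI)
  fix \<pi>s :: "'p list" assume len: "length \<pi>s = l"
  let ?M = "mprod (map A \<pi>s)"
  have "?M *v Bx = (\<Sum>\<pi>\<in>UNIV. w \<pi> *\<^sub>R (?M *v (A \<pi> *v x)))"
    unfolding Bx by (simp add: mv_sum matrix_vector_mult_scaleR)
  hence "norm (?M *v Bx) \<le> (\<Sum>\<pi>\<in>UNIV. norm (w \<pi> *\<^sub>R (?M *v (A \<pi> *v x))))"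
    by (metis norm_sum)
  also have "\<dots> \<le> (\<Sum>\<pi>\<in>UNIV. w \<pi> * sqrt (Ql A (Suc l) x))"
  proof (rule sum_mono)
    fix \<pi> assume "\<pi> \<in> (UNIV::'p set)"
    have "(norm (mprod (map A (\<pi> # \<pi>s)) *v x))\<^sup>2 \<le> Ql A (Suc l) x" by (rule Ql_ge) (simp add: len)
    hence "norm (?M *v (A \<pi> *v x)) \<le> sqrt (Ql A (Suc l) x)"
      by (simp add: mprod_Cons matrix_vector_mul_assoc real_le_rsqrt)
    thus "norm (w \<pi> *\<^sub>R (?M *v (A \<pi> *v x))) \<le> w \<pi> * sqrt (Ql A (Suc l) x)"
      using assms(1) by (simp add: mult_left_mono)
  qed
  also have "\<dots> = sqrt (Ql A (Suc l) x)" using assms(2) by (simp add: sum_distrib_right[symmetric])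
  finally show "(norm (?M *v Bx))\<^sup>2 \<le> Ql A (Suc l) x"
    by (metis Ql_nonneg norm_ge_zero power_mono real_sqrt_pow2)
qed



lemma fekete_bound:
  fixes a :: "nat \<Rightarrow> real"
  assumes nn: "\<forall>n. 0 \<le> a n" and sm: "\<forall>m n. a (m+n) \<le> a m * a n"
    and m: "0 < m" and am: "a m \<le> c^m" and c: "0 < c"
  shows "\<exists>K>0. \<forall>n. a n \<le> K * c^n"
proof -
  define K where "K = max 1 (Max ((\<lambda>r. a r / c^r) ` {..<m}))"
  have K1: "K \<ge> 1" unfolding K_def by simp
  have Kr: "a r \<le> K * c^r" if "r < m" for r
  proof -
    have "a r / c^r \<le> K" unfolding K_def using that by (intro max.coboundedI2 Max_ge) auto
    thus ?thesis using c by (simp add: divide_le_eq)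
  qed
  have "a n \<le> K * c^n" for n
  proof (induction n rule: less_induct)
    case (less n)
    show ?case
    proof (cases "n < m")
      case True thus ?thesis by (rule Kr)
    next
      case False
      then obtain k where n: "n = m + k" by (metis le_Suc_ex not_less)
      have "k < n" using n m by simp
      have "a n \<le> a m * a k" using sm n by simp
      also have "\<dots> \<le> c^m * (K * c^k)"
        by (rule mult_mono) (use am less.IH[OF \<open>k < n\<close>] nn c in auto)
      also have "\<dots> = K * c^n" by (simp add: n power_add)
      finally show ?thesis .
    qed
  qed
  thus ?thesis using K1 by (intro exI[of _ K]) auto
qed

lemma fekete_conv:
  fixes a :: "nat \<Rightarrow> real"
  assumes nn: "\<forall>n. 0 \<le> a n" and sm: "\<forall>m n. a (m+n) \<le> a m * a n"
  shows "(\<lambda>n. root n (a n)) \<longlonglongrightarrow> (INF n\<in>{1..}. root n (a n))"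
proof -
  define b where "b n = root n (a n)" for n
  define L where "L = (INF n\<in>{1..}. b n)"
  have b0: "0 \<le> b n" for n unfolding b_def using nn real_root_ge_zero by blast
  have bdd: "bdd_below (b ` {1..})" using b0 by (intro bdd_belowI[of _ 0]) auto
  have Lb: "L \<le> b n" if "n \<ge> 1" for n unfolding L_def using bdd that by (intro cInf_lower) auto
  have L0: "0 \<le> L" unfolding L_def using b0 by (intro cInf_greatest) auto
  have "b \<longlonglongrightarrow> L"
  proof (rule order_tendstoI)
    fix y assume "y < L"
    thus "\<forall>\<^sub>F n in sequentially. y < b n"
      using Lb by (intro eventually_sequentiallyI[of 1]) (auto intro: less_le_trans)
  next
    fix y assume yL: "L < y"
    define e where "e = (y - L) / 2"
    have e: "0 < e" using yL by (simp add: e_def)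
    have "Inf (b ` {1..}) < L + e" using e by (simp add: L_def)
    then obtain m where m: "m \<ge> 1" "b m < L + e" using cInf_lessD[of "b ` {1..}"] by auto
    define c where "c = L + e"
    have c: "0 < c" using L0 e by (simp add: c_def)
    have "a m = b m ^ m" unfolding b_def using nn m by simp
    also have "\<dots> \<le> c ^ m" using m b0 by (intro power_mono) (auto simp: c_def)
    finally obtain K where K: "K > 0" "\<forall>n. a n \<le> K * c^n"
      using fekete_bound[OF nn sm _ _ c, of m] m by auto
    have bn: "b n \<le> root n K * c" if "n \<ge> 1" for n
    proof -
      have "b n \<le> root n (K * c^n)" unfolding b_def using that K by (intro real_root_le_mono) auto
      also have "\<dots> = root n K * c" using that c by (simp add: real_root_mult real_root_power_cancel)
      finally show ?thesis .
    qed
    have "(\<lambda>n. root n K * c) \<longlonglongrightarrow> 1 * c" by (intro tendsto_intros LIMSEQ_root_const K)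
    moreover have "1 * c < y" using yL by (simp add: c_def e_def field_simps)
    ultimately have "\<forall>\<^sub>F n in sequentially. root n K * c < y" by (rule order_tendstoD)
    moreover have "\<forall>\<^sub>F n in sequentially. n \<ge> 1" by (rule eventually_ge_at_top)
    ultimately show "\<forall>\<^sub>F n in sequentially. b n < y"
      by eventually_elim (use bn in \<open>auto intro: le_less_trans\<close>)
  qed
  thus ?thesis unfolding b_def L_def .
qed

definition anorm :: "(real^'n::finite^'n) set \<Rightarrow> nat \<Rightarrow> real" where
  "anorm H k = Max ((\<lambda>Bs. onorm (\<lambda>x. mprod Bs *v x)) ` {Bs. set Bs \<subseteq> H \<and> length Bs = k})"

context
  fixes H :: "(real^'n::finite^'n) set"
  assumes Hfin: "finite H" and Hne: "H \<noteq> {}"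
begin

lemma Lfin: "finite {Bs. set Bs \<subseteq> H \<and> length Bs = k}"
  using finite_lists_length_eq[OF Hfin] .

lemma Lne: "{Bs. set Bs \<subseteq> H \<and> length Bs = k} \<noteq> {}"
proof -
  obtain h where "h \<in> H" using Hne by auto
  thus ?thesis by (auto intro!: exI[of _ "replicate k h"])
qed

lemma anorm_ge: "set Bs \<subseteq> H \<Longrightarrow> onorm (\<lambda>x. mprod Bs *v x) \<le> anorm H (length Bs)"
  unfolding anorm_def by (rule Max_ge) (use Lfin in auto)

lemma anorm_attain: "\<exists>Bs. set Bs \<subseteq> H \<and> length Bs = k \<and> anorm H k = onorm (\<lambda>x. mprod Bs *v x)"
proof -
  have "anorm H k \<in> (\<lambda>Bs. onorm (\<lambda>x. mprod Bs *v x)) ` {Bs. set Bs \<subseteq> H \<and> length Bs = k}"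
    unfolding anorm_def by (rule Max_in) (use Lfin Lne in auto)
  thus ?thesis by auto
qed

lemma anorm_nonneg: "0 \<le> anorm H k"
  using anorm_attain[of k] onorm_pos_le[OF matrix_vector_mul_bounded_linear] by metis

lemma anorm_submult: "anorm H (m + n) \<le> anorm H m * anorm H n"
proof -
  obtain Bs where Bs: "set Bs \<subseteq> H" "length Bs = m + n" "anorm H (m+n) = onorm (\<lambda>x. mprod Bs *v x)"
    using anorm_attain by blast
  let ?X = "take m Bs" and ?Y = "drop m Bs"
  have "mprod Bs = mprod ?Y ** mprod ?X" by (metis append_take_drop_id mprod_append)
  hence "(\<lambda>x. mprod Bs *v x) = (\<lambda>x. mprod ?Y *v x) \<circ> (\<lambda>x. mprod ?X *v x)"
    by (auto simp: matrix_vector_mul_assoc)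
  hence "anorm H (m+n) \<le> onorm (\<lambda>x. mprod ?Y *v x) * onorm (\<lambda>x. mprod ?X *v x)"
    using Bs onorm_compose[OF matrix_vector_mul_bounded_linear matrix_vector_mul_bounded_linear] by metis
  also have "\<dots> \<le> anorm H n * anorm H m"
  proof (rule mult_mono)
    have "set ?Y \<subseteq> H" "set ?X \<subseteq> H" using Bs(1) set_take_subset[of m Bs] set_drop_subset[of m Bs] by blast+
    moreover have "length ?Y = n" "length ?X = m" using Bs by auto
    ultimately show "onorm (\<lambda>x. mprod ?Y *v x) \<le> anorm H n" "onorm (\<lambda>x. mprod ?X *v x) \<le> anorm H m"
      using anorm_ge[of ?Y] anorm_ge[of ?X] by auto
  qed (use onorm_pos_le[OF matrix_vector_mul_bounded_linear] anorm_nonneg in auto)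
  finally show ?thesis by (simp add: mult.commute)
qed

lemma JSR_eq: "(\<lambda>k. SUP Bs \<in> {Bs. set Bs \<subseteq> H \<and> length Bs = k}. root k (onorm (\<lambda>x. mprod Bs *v x)))
     = (\<lambda>k. root k (anorm H k))"
proof
  fix k
  have mono: "mono (root k)"
    by (cases "k = 0") (auto simp: mono_def intro: real_root_le_mono)
  show "(SUP Bs \<in> {Bs. set Bs \<subseteq> H \<and> length Bs = k}. root k (onorm (\<lambda>x. mprod Bs *v x))) = root k (anorm H k)"
    unfolding anorm_def
    by (subst mono_Max_commute[OF mono]) (use Lfin Lne in \<open>auto simp: image_image intro!: cSup_eq_Max\<close>)
qed

lemma JSR_conv: "(\<lambda>k. root k (anorm H k)) \<longlonglongrightarrow> JSR H"
proof -
  have "(\<lambda>k. root k (anorm H k)) \<longlonglongrightarrow> (INF n\<in>{1..}. root n (anorm H n))"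
    by (rule fekete_conv) (auto simp: anorm_nonneg anorm_submult)
  hence "lim (\<lambda>k. root k (anorm H k)) = (INF n\<in>{1..}. root n (anorm H n))" by (rule limI)
  thus ?thesis unfolding JSR_def JSR_eq using \<open>(\<lambda>k. root k (anorm H k)) \<longlonglongrightarrow> _\<close> by simp
qed

lemma JSR_nonneg: "0 \<le> JSR H"
  by (rule LIMSEQ_le_const[OF JSR_conv]) (use anorm_nonneg real_root_ge_zero in blast)

lemma JSR_bound:
  assumes "JSR H < \<beta>"
  shows "\<exists>K c. 0 < c \<and> c < \<beta> \<and> 0 < K \<and> (\<forall>n. anorm H n \<le> K * c^n)"
proof -
  define c where "c = (JSR H + \<beta>) / 2"
  have c: "JSR H < c" "c < \<beta>" "0 < c" using assms JSR_nonneg by (auto simp: c_def)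
  have "\<forall>\<^sub>F k in sequentially. root k (anorm H k) < c" by (rule order_tendstoD(2)[OF JSR_conv c(1)])
  moreover have "\<forall>\<^sub>F k in sequentially. k \<ge> 1" by (rule eventually_ge_at_top)
  ultimately have "\<forall>\<^sub>F k in sequentially. k \<ge> 1 \<and> root k (anorm H k) < c" by eventually_elim auto
  then obtain m where m: "m \<ge> 1" "root m (anorm H m) < c"
    using eventually_sequentially by auto
  have "anorm H m = root m (anorm H m) ^ m" using real_root_pow_pos2[of m "anorm H m"] m(1) anorm_nonneg[of m] by simp
  also have "\<dots> \<le> c ^ m" using m anorm_nonneg[of m] by (intro power_mono) (auto simp: real_root_ge_zero)
  finally obtain K where "K > 0" "\<forall>n. anorm H n \<le> K * c^n"
    using fekete_bound[of "anorm H" m c] m c anorm_nonneg anorm_submult by auto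
  thus ?thesis using c by blast
qed

end


lemma Ql_bound: "Ql A l x \<le> (anorm (range A) l)\<^sup>2 * (norm x)\<^sup>2"
  unfolding Ql_le_iff
proof (intro allI impI)
  fix \<pi>s :: "'a list" assume len: "length \<pi>s = l"
  let ?M = "mprod (map A \<pi>s)"
  have "norm (?M *v x) \<le> onorm (\<lambda>x. ?M *v x) * norm x" by (rule onorm) simp
  also have "\<dots> \<le> anorm (range A) l * norm x"
    using anorm_ge[of "range A" "map A \<pi>s"] len by (intro mult_right_mono) auto
  finally have "(norm (?M *v x))\<^sup>2 \<le> (anorm (range A) l * norm x)\<^sup>2" by (intro power_mono) auto
  thus "(norm (?M *v x))\<^sup>2 \<le> (anorm (range A) l)\<^sup>2 * (norm x)\<^sup>2" by (simp add: power_mult_distrib)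
qed

definition fterm :: "('p::finite \<Rightarrow> real^'m::finite^'m) \<Rightarrow> real \<Rightarrow> nat \<Rightarrow> real^'m \<Rightarrow> real" where
  "fterm A \<beta> l x = inverse \<beta> ^ (2 * l) * Ql A l x"

definition Vs :: "('p::finite \<Rightarrow> real^'m::finite^'m) \<Rightarrow> real \<Rightarrow> real^'m \<Rightarrow> real" where
  "Vs A \<beta> x = suminf (\<lambda>l. fterm A \<beta> l x)"

context
  fixes A :: "'p::finite \<Rightarrow> real^'m::finite^'m" and \<beta> K c :: real
  assumes \<beta>: "0 < \<beta>" and c: "0 < c" "c < \<beta>" and K: "0 < K"
    and aK: "\<forall>n. anorm (range A) n \<le> K * c^n"
begin

definition "q = (c * inverse \<beta>)\<^sup>2"

lemma q: "0 \<le> q" "q < 1"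
proof -
  have "c * inverse \<beta> < 1" using c \<beta> by (simp add: field_simps)
  moreover have "0 \<le> c * inverse \<beta>" using c \<beta> by simp
  ultimately show "0 \<le> q" "q < 1" unfolding q_def by (auto simp: power_less_one_iff abs_square_less_1)
qed

lemma fterm_nonneg: "0 \<le> fterm A \<beta> l x"
  unfolding fterm_def by (intro mult_nonneg_nonneg zero_le_power) (use \<beta> Ql_nonneg in auto)

lemma fterm_bound: "fterm A \<beta> l x \<le> (K\<^sup>2 * (norm x)\<^sup>2) * q ^ l"
proof -
  have a0: "0 \<le> anorm (range A) l" by (rule anorm_nonneg) auto
  have "fterm A \<beta> l x \<le> inverse \<beta> ^ (2 * l) * ((K * c^l)\<^sup>2 * (norm x)\<^sup>2)"
    unfolding fterm_def using \<beta>
    by (intro mult_left_mono order_trans[OF Ql_bound] mult_right_mono power_mono) (use aK a0 in auto)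
  also have "\<dots> = (K\<^sup>2 * (norm x)\<^sup>2) * q ^ l"
    by (simp add: q_def power_mult_distrib power_mult[symmetric] mult.commute mult.left_commute)
  finally show ?thesis .
qed

lemma fterm_summable: "summable (\<lambda>l. fterm A \<beta> l x)"
  by (rule summable_comparison_test[of _ "\<lambda>l. (K\<^sup>2 * (norm x)\<^sup>2) * q ^ l"])
     (use fterm_nonneg fterm_bound q in \<open>auto intro!: summable_mult summable_geometric\<close>)

definition "Cst = 1 + K\<^sup>2 * suminf (\<lambda>l. q ^ l)"

lemma q_summable: "summable (\<lambda>l. q ^ l)"
  using q by (intro summable_geometric) auto

lemma Cst_ge1: "1 \<le> Cst"
proof -
  have "0 \<le> suminf (\<lambda>l. q ^ l)" by (rule suminf_nonneg[OF q_summable]) (use q in auto)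
  thus ?thesis unfolding Cst_def by simp
qed

lemma Vs_upper: "Vs A \<beta> x \<le> Cst * (norm x)\<^sup>2"
proof -
  have "Vs A \<beta> x \<le> suminf (\<lambda>l. (K\<^sup>2 * (norm x)\<^sup>2) * q ^ l)"
    unfolding Vs_def by (rule suminf_le) (use fterm_bound fterm_summable q in \<open>auto intro!: summable_mult summable_geometric\<close>)
  also have "\<dots> = (K\<^sup>2 * (norm x)\<^sup>2) * suminf (\<lambda>l. q ^ l)"
    by (rule suminf_mult) (use q in \<open>auto intro!: summable_geometric\<close>)
  also have "\<dots> \<le> Cst * (norm x)\<^sup>2" unfolding Cst_def by (simp add: algebra_simps)
  finally show ?thesis .
qed

lemma Vs_split: "Vs A \<beta> x = (norm x)\<^sup>2 + suminf (\<lambda>l. fterm A \<beta> (Suc l) x)"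
  unfolding Vs_def using suminf_split_head[OF fterm_summable, of x]
  by (simp add: fterm_def Ql_0 summable_Suc_iff fterm_summable suminf_split_head)

lemma Vs_lower: "(norm x)\<^sup>2 \<le> Vs A \<beta> x"
  unfolding Vs_split
  using suminf_nonneg[OF summable_Suc_iff[THEN iffD2, OF fterm_summable[of x]]] fterm_nonneg by auto

lemma Vs_nonneg: "0 \<le> Vs A \<beta> x"
  using Vs_lower[of x] by (meson order_trans zero_le_power2)

lemma Vs_scale: "Vs A \<beta> (a *\<^sub>R x) = a\<^sup>2 * Vs A \<beta> x"
  unfolding Vs_def fterm_def Ql_scale
  using suminf_mult[OF fterm_summable[of x, unfolded fterm_def], of "a\<^sup>2"]
  by (simp add: algebra_simps)

lemma Vs_zero_iff: "Vs A \<beta> x = 0 \<longleftrightarrow> x = 0"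
proof
  assume "Vs A \<beta> x = 0" thus "x = 0" using Vs_lower[of x] by simp
next
  assume "x = 0" thus "Vs A \<beta> x = 0" using Vs_scale[of 0 0] by simp
qed

lemma Vs_partial: "(\<lambda>t. \<Sum>l\<le>t. fterm A \<beta> l x) \<longlonglongrightarrow> Vs A \<beta> x"
  unfolding Vs_def by (rule summable_LIMSEQ'[OF fterm_summable])

lemma Vs_triangle: "sqrt (Vs A \<beta> (x + y)) \<le> sqrt (Vs A \<beta> x) + sqrt (Vs A \<beta> y)"
proof -
  define u where "u l = sqrt (inverse \<beta> ^ (2 * l)) * sqrt (Ql A l x)" for l
  define v where "v l = sqrt (inverse \<beta> ^ (2 * l)) * sqrt (Ql A l y)" for l
  have fu: "fterm A \<beta> l x = (u l)\<^sup>2" for l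
    unfolding u_def fterm_def using \<beta> real_sqrt_pow2[OF Ql_nonneg[of A l x]] by (simp add: power_mult_distrib)
  have fv: "fterm A \<beta> l y = (v l)\<^sup>2" for l
    unfolding v_def fterm_def using \<beta> real_sqrt_pow2[OF Ql_nonneg[of A l y]] by (simp add: power_mult_distrib)
  have "sum (\<lambda>l. fterm A \<beta> l (x + y)) {..<n} \<le> (sqrt (Vs A \<beta> x) + sqrt (Vs A \<beta> y))\<^sup>2" for n
  proof -
    have "sum (\<lambda>l. fterm A \<beta> l (x + y)) {..<n} \<le> sum (\<lambda>l. (u l + v l)\<^sup>2) {..<n}"
    proof (rule sum_mono)
      fix l
      have "sqrt (Ql A l (x+y)) \<le> sqrt (Ql A l x) + sqrt (Ql A l y)" by (rule Ql_triangle)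
      hence "Ql A l (x+y) \<le> (sqrt (Ql A l x) + sqrt (Ql A l y))\<^sup>2"
        by (metis Ql_nonneg power_mono real_sqrt_ge_zero real_sqrt_pow2)
      hence "inverse \<beta> ^ (2 * l) * Ql A l (x+y) \<le> inverse \<beta> ^ (2 * l) * (sqrt (Ql A l x) + sqrt (Ql A l y))\<^sup>2"
        using \<beta> by (intro mult_left_mono) auto
      also have "\<dots> = (u l + v l)\<^sup>2"
      proof -
        have h: "(sqrt (inverse \<beta> ^ (2*l)))\<^sup>2 = inverse \<beta> ^ (2*l)" using \<beta> by simp
        have e: "u l + v l = sqrt (inverse \<beta> ^ (2*l)) * (sqrt (Ql A l x) + sqrt (Ql A l y))"
          unfolding u_def v_def by (simp only: distrib_left)
        show ?thesis unfolding e power_mult_distrib h ..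
      qed
      finally show "fterm A \<beta> l (x + y) \<le> (u l + v l)\<^sup>2" unfolding fterm_def .
    qed
    also have "\<dots> = (L2_set (\<lambda>l. u l + v l) {..<n})\<^sup>2" unfolding L2_set_def
      by (rule real_sqrt_pow2[symmetric]) (simp add: sum_nonneg)
    also have "\<dots> \<le> (L2_set u {..<n} + L2_set v {..<n})\<^sup>2"
      by (rule power_mono[OF L2_set_triangle_ineq L2_set_nonneg])
    also have "\<dots> \<le> (sqrt (Vs A \<beta> x) + sqrt (Vs A \<beta> y))\<^sup>2"
    proof (rule power_mono[OF add_mono])
      have "sum (\<lambda>l. (u l)\<^sup>2) {..<n} \<le> Vs A \<beta> x"
        unfolding Vs_def fu[symmetric] by (rule sum_le_suminf[OF fterm_summable]) (auto simp: fterm_nonneg)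
      thus "L2_set u {..<n} \<le> sqrt (Vs A \<beta> x)" unfolding L2_set_def by (rule real_sqrt_le_mono)
      have "sum (\<lambda>l. (v l)\<^sup>2) {..<n} \<le> Vs A \<beta> y"
        unfolding Vs_def fv[symmetric] by (rule sum_le_suminf[OF fterm_summable]) (auto simp: fterm_nonneg)
      thus "L2_set v {..<n} \<le> sqrt (Vs A \<beta> y)" unfolding L2_set_def by (rule real_sqrt_le_mono)
      show "0 \<le> L2_set u {..<n} + L2_set v {..<n}" by (intro add_nonneg_nonneg L2_set_nonneg)
    qed
    finally show ?thesis .
  qed
  hence "Vs A \<beta> (x + y) \<le> (sqrt (Vs A \<beta> x) + sqrt (Vs A \<beta> y))\<^sup>2"
    unfolding Vs_def by (intro suminf_le_const fterm_summable)
  hence "sqrt (Vs A \<beta> (x + y)) \<le> sqrt ((sqrt (Vs A \<beta> x) + sqrt (Vs A \<beta> y))\<^sup>2)"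
    by (rule real_sqrt_le_mono)
  also have "\<dots> = sqrt (Vs A \<beta> x) + sqrt (Vs A \<beta> y)" using Vs_nonneg[of x] Vs_nonneg[of y] by simp
  finally show ?thesis .
qed

lemma Vs_step:
  assumes "\<forall>l. Ql A l y \<le> Ql A (Suc l) x"
  shows "Vs A \<beta> y \<le> \<beta>\<^sup>2 * (Vs A \<beta> x - (norm x)\<^sup>2)"
proof -
  have "Vs A \<beta> y \<le> suminf (\<lambda>l. \<beta>\<^sup>2 * fterm A \<beta> (Suc l) x)"
    unfolding Vs_def
  proof (rule suminf_le)
    fix l
    have "fterm A \<beta> l y \<le> inverse \<beta> ^ (2 * l) * Ql A (Suc l) x"
      unfolding fterm_def using assms \<beta> by (intro mult_left_mono) auto
    also have "\<dots> = \<beta>\<^sup>2 * fterm A \<beta> (Suc l) x" unfolding fterm_def using \<beta>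
      by (simp add: power2_eq_square field_simps)
    finally show "fterm A \<beta> l y \<le> \<beta>\<^sup>2 * fterm A \<beta> (Suc l) x" .
  qed (use fterm_summable[of y] summable_mult[OF summable_Suc_iff[THEN iffD2, OF fterm_summable[of x]], of "\<beta>\<^sup>2"] in auto)
  also have "\<dots> = \<beta>\<^sup>2 * suminf (\<lambda>l. fterm A \<beta> (Suc l) x)"
    by (rule suminf_mult) (rule summable_Suc_iff[THEN iffD2, OF fterm_summable[of x]])
  also have "\<dots> = \<beta>\<^sup>2 * (Vs A \<beta> x - (norm x)\<^sup>2)" using Vs_split[of x] by simp
  finally show ?thesis .
qed

end


lemma sum_policy:
  fixes \<mu> :: "'s::finite \<Rightarrow> 'a::finite \<Rightarrow> real"
  assumes "\<forall>t. (\<Sum>a\<in>UNIV. \<mu> t a) = 1"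
  shows "(\<Sum>\<pi>\<in>UNIV. (\<Prod>t\<in>UNIV. \<mu> t (\<pi> t)) * f (\<pi> s)) = (\<Sum>a\<in>UNIV. \<mu> s a * f a)"
proof -
  define g where "g t a = \<mu> t a * (if t = s then f a else 1)" for t a
  have "(\<Prod>t\<in>UNIV. \<Sum>a\<in>UNIV. g t a) = (\<Sum>\<pi>\<in>PiE UNIV (\<lambda>_. UNIV). \<Prod>t\<in>UNIV. g t (\<pi> t))"
    by (rule prod_sum_PiE) auto
  also have "\<dots> = (\<Sum>\<pi>\<in>UNIV. (\<Prod>t\<in>UNIV. \<mu> t (\<pi> t)) * f (\<pi> s))"
  proof (rule sum.cong)
    fix \<pi> :: "'s \<Rightarrow> 'a"
    have "(\<Prod>t\<in>UNIV. g t (\<pi> t)) = (\<Prod>t\<in>UNIV. \<mu> t (\<pi> t)) * (\<Prod>t\<in>UNIV. if t = s then f (\<pi> t) else 1)"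
      unfolding g_def by (rule prod.distrib)
    also have "(\<Prod>t\<in>UNIV. if t = s then f (\<pi> t) else 1) = f (\<pi> s)" by (simp add: prod.delta)
    finally show "(\<Prod>t\<in>UNIV. g t (\<pi> t)) = (\<Prod>t\<in>UNIV. \<mu> t (\<pi> t)) * f (\<pi> s)" .
  qed simp
  finally have "(\<Sum>\<pi>\<in>UNIV. (\<Prod>t\<in>UNIV. \<mu> t (\<pi> t)) * f (\<pi> s)) = (\<Prod>t\<in>UNIV. \<Sum>a\<in>UNIV. g t a)" ..
  also have "\<dots> = (\<Prod>t\<in>UNIV. if t = s then (\<Sum>a\<in>UNIV. \<mu> s a * f a) else 1)"
    by (rule prod.cong) (auto simp: g_def assms)
  also have "\<dots> = (\<Sum>a\<in>UNIV. \<mu> s a * f a)" by (simp add: prod.delta)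
  finally show ?thesis .
qed

lemma sum_pair_fst:
  fixes h :: "'a::finite \<Rightarrow> real"
  shows "(\<Sum>sa\<in>(UNIV::('s::finite \<times> 'a) set). if fst sa = s then h (snd sa) else 0) = (\<Sum>a\<in>UNIV. h a)"
proof -
  have "(\<Sum>sa\<in>(UNIV::('s \<times> 'a) set). if fst sa = s then h (snd sa) else 0)
      = (\<Sum>t\<in>UNIV. \<Sum>a\<in>UNIV. if t = s then h a else 0)"
    unfolding sum.cartesian_product UNIV_Times_UNIV by (rule sum.cong) (auto simp: case_prod_beta)
  also have "\<dots> = (\<Sum>t\<in>UNIV. if t = s then (\<Sum>a\<in>UNIV. h a) else 0)"
    by (rule sum.cong) auto
  also have "\<dots> = (\<Sum>a\<in>UNIV. h a)" by (simp add: sum.delta)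
  finally show ?thesis .
qed

lemma Pimat_mv: "(Pimat \<mu> *v z) $ s = (\<Sum>a\<in>UNIV. \<mu> s a * z $ (s, a))"
proof -
  have "(Pimat \<mu> *v z) $ s = (\<Sum>sa\<in>UNIV. if fst sa = s then \<mu> s (snd sa) * z $ (s, snd sa) else 0)"
    unfolding Pimat_def matrix_vector_mult_def by (auto intro!: sum.cong)
  also have "\<dots> = (\<Sum>a\<in>UNIV. \<mu> s a * z $ (s, a))" by (rule sum_pair_fst)
  finally show ?thesis .
qed

lemma Pimat_det_mv: "(Pimat (det_policy \<pi>) *v z) $ s = z $ (s, \<pi> s)"
proof -
  have "(Pimat (det_policy \<pi>) *v z) $ s = (\<Sum>a\<in>UNIV. if a = \<pi> s then z $ (s, a) else 0)"
    unfolding Pimat_mv det_policy_def by (rule sum.cong) auto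
  also have "\<dots> = z $ (s, \<pi> s)" by (simp add: sum.delta')
  finally show ?thesis .
qed

lemma Pimat_decomp:
  fixes \<mu> :: "'s::finite \<Rightarrow> 'a::finite \<Rightarrow> real"
  assumes "\<forall>t. (\<Sum>a\<in>UNIV. \<mu> t a) = 1"
  shows "Pimat \<mu> *v z = (\<Sum>\<pi>\<in>UNIV. (\<Prod>t\<in>UNIV. \<mu> t (\<pi> t)) *\<^sub>R (Pimat (det_policy \<pi>) *v z))"
  unfolding vec_eq_iff
proof
  fix s
  show "(Pimat \<mu> *v z) $ s = (\<Sum>\<pi>\<in>UNIV. (\<Prod>t\<in>UNIV. \<mu> t (\<pi> t)) *\<^sub>R (Pimat (det_policy \<pi>) *v z)) $ s"
    unfolding sum_component Pimat_mv using sum_policy[OF assms, of "\<lambda>a. z $ (s,a)" s] by (simp add: Pimat_det_mv)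
qed

lemma Amat_mv: "Amat P \<gamma> Phi d \<alpha> \<mu> *v x = x - \<alpha> *\<^sub>R ((transpose Phi ** Dmat d ** Phi) *v x)
    + (\<alpha> * \<gamma>) *\<^sub>R ((transpose Phi ** Dmat d ** Pmat P) *v (Pimat \<mu> *v (Phi *v x)))"
  unfolding Amat_def
  by (simp add: matrix_vector_mult_add_rdistrib matrix_vector_mult_diff_rdistrib matrix_vector_mul_lid
      scaleR_matrix_vector_assoc[symmetric] matrix_vector_mul_assoc matrix_mul_assoc)

lemma weights_sum:
  fixes \<mu> :: "'s::finite \<Rightarrow> 'a::finite \<Rightarrow> real"
  assumes "\<forall>t. (\<Sum>a\<in>UNIV. \<mu> t a) = 1"
  shows "(\<Sum>\<pi>\<in>UNIV. (\<Prod>t\<in>UNIV. \<mu> t (\<pi> t))) = 1"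
  using sum_policy[OF assms, of "\<lambda>_. 1" undefined] assms by simp

lemma Amat_decomp:
  fixes \<mu> :: "'s::finite \<Rightarrow> 'a::finite \<Rightarrow> real"
  assumes mu: "\<forall>t. (\<Sum>a\<in>UNIV. \<mu> t a) = 1"
  shows "Amat P \<gamma> Phi d \<alpha> \<mu> *v x = (\<Sum>\<pi>\<in>UNIV. (\<Prod>t\<in>UNIV. \<mu> t (\<pi> t)) *\<^sub>R (Amat P \<gamma> Phi d \<alpha> (det_policy \<pi>) *v x))"
proof -
  define w where "w \<pi> = (\<Prod>t\<in>UNIV. \<mu> t (\<pi> t))" for \<pi> :: "'s \<Rightarrow> 'a"
  define X where "X = transpose Phi ** Dmat d ** Phi"
  define Y where "Y = transpose Phi ** Dmat d ** Pmat P"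
  have w1: "(\<Sum>\<pi>\<in>UNIV. w \<pi>) = 1" unfolding w_def by (rule weights_sum[OF mu])
  have "(\<Sum>\<pi>\<in>UNIV. w \<pi> *\<^sub>R (Amat P \<gamma> Phi d \<alpha> (det_policy \<pi>) *v x))
      = (\<Sum>\<pi>\<in>UNIV. w \<pi> *\<^sub>R x - \<alpha> *\<^sub>R (w \<pi> *\<^sub>R (X *v x)) + (\<alpha> * \<gamma>) *\<^sub>R (Y *v (w \<pi> *\<^sub>R (Pimat (det_policy \<pi>) *v (Phi *v x)))))"
    unfolding Amat_mv X_def Y_def by (simp add: algebra_simps)
  also have "\<dots> = (\<Sum>\<pi>\<in>UNIV. w \<pi>) *\<^sub>R x - \<alpha> *\<^sub>R ((\<Sum>\<pi>\<in>UNIV. w \<pi>) *\<^sub>R (X *v x))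
      + (\<alpha> * \<gamma>) *\<^sub>R (Y *v (\<Sum>\<pi>\<in>UNIV. w \<pi> *\<^sub>R (Pimat (det_policy \<pi>) *v (Phi *v x))))"
    by (simp add: sum.distrib sum_subtractf scaleR_sum_right[symmetric] scaleR_sum_left[symmetric] mv_sum sum_distrib_left[symmetric])
  also have "\<dots> = Amat P \<gamma> Phi d \<alpha> \<mu> *v x"
    unfolding Amat_mv X_def Y_def w1 Pimat_decomp[OF mu] w_def by (simp add: weights_sum[OF mu])
  finally show ?thesis unfolding w_def ..
qed



lemma Vtheta_ge: "(Phi $ (s,a)) \<bullet> \<theta> \<le> Vtheta Phi \<theta> $ s"
  unfolding Vtheta_def by simp

lemma Vtheta_attain: "\<exists>a. Vtheta Phi \<theta> $ s = (Phi $ (s,a)) \<bullet> \<theta>"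
proof -
  have "Max ((\<lambda>a. (Phi $ (s, a)) \<bullet> \<theta>) ` UNIV) \<in> (\<lambda>a. (Phi $ (s, a)) \<bullet> \<theta>) ` UNIV"
    by (rule Max_in) auto
  then obtain a where "Max ((\<lambda>a. (Phi $ (s, a)) \<bullet> \<theta>) ` UNIV) = (Phi $ (s, a)) \<bullet> \<theta>" by blast
  thus ?thesis unfolding Vtheta_def by auto
qed

lemma Phi_mv: "(Phi *v z) $ sa = (Phi $ sa) \<bullet> z"
  unfolding matrix_vector_mult_def inner_vec_def by simp

lemma contraction_policy:
  fixes Phi :: "real^'m::finite^('s::finite \<times> 'a::finite)"
  shows "\<exists>\<mu>. stoch_policy \<mu> \<and> Pimat \<mu> *v (Phi *v (\<theta> - \<theta>')) = Vtheta Phi \<theta> - Vtheta Phi \<theta>'"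
proof -
  define a1 where "a1 s = (SOME a. Vtheta Phi \<theta> $ s = (Phi $ (s,a)) \<bullet> \<theta>)" for s
  define a2 where "a2 s = (SOME a. Vtheta Phi \<theta>' $ s = (Phi $ (s,a)) \<bullet> \<theta>')" for s
  have a1: "Vtheta Phi \<theta> $ s = (Phi $ (s,a1 s)) \<bullet> \<theta>" for s
    unfolding a1_def by (rule someI_ex[OF Vtheta_attain])
  have a2: "Vtheta Phi \<theta>' $ s = (Phi $ (s,a2 s)) \<bullet> \<theta>'" for s
    unfolding a2_def by (rule someI_ex[OF Vtheta_attain])
  define u where "u s a = (Phi $ (s,a)) \<bullet> (\<theta> - \<theta>')" for s a
  define D where "D s = Vtheta Phi \<theta> $ s - Vtheta Phi \<theta>' $ s" for s
  have up: "D s \<le> u s (a1 s)" for s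
    using Vtheta_ge[of Phi s "a1 s" \<theta>'] a1[of s] unfolding D_def u_def by (simp add: inner_diff_right)
  have lo: "u s (a2 s) \<le> D s" for s
    using Vtheta_ge[of Phi s "a2 s" \<theta>] a2[of s] unfolding D_def u_def by (simp add: inner_diff_right)
  define lam where "lam s = (if u s (a1 s) = u s (a2 s) then 1 else (D s - u s (a2 s)) / (u s (a1 s) - u s (a2 s)))" for s
  have lam01: "0 \<le> lam s \<and> lam s \<le> 1" for s
  proof (cases "u s (a1 s) = u s (a2 s)")
    case False
    hence "u s (a2 s) < u s (a1 s)" using up[of s] lo[of s] by linarith
    thus ?thesis unfolding lam_def using up[of s] lo[of s] False by (auto simp: field_simps)
  qed (simp add: lam_def)
  have lamD: "lam s * u s (a1 s) + (1 - lam s) * u s (a2 s) = D s" for s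
  proof (cases "u s (a1 s) = u s (a2 s)")
    case True
    thus ?thesis unfolding lam_def using up[of s] lo[of s] by simp
  next
    case False
    hence nz: "u s (a1 s) - u s (a2 s) \<noteq> 0" by simp
    have "lam s * (u s (a1 s) - u s (a2 s)) = D s - u s (a2 s)"
      unfolding lam_def using False nz by simp
    thus ?thesis by (simp add: algebra_simps)
  qed
  define \<mu> where "\<mu> s a = lam s * (if a = a1 s then 1 else 0) + (1 - lam s) * (if a = a2 s then 1 else 0)" for s a
  have sum_mu: "(\<Sum>a\<in>UNIV. \<mu> s a * g a) = lam s * g (a1 s) + (1 - lam s) * g (a2 s)" for s and g :: "'a \<Rightarrow> real"
  proof -
    have "(\<Sum>a\<in>UNIV. \<mu> s a * g a) = (\<Sum>a\<in>UNIV. lam s * (if a = a1 s then g a else 0) + (1 - lam s) * (if a = a2 s then g a else 0))"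
      unfolding \<mu>_def by (rule sum.cong) (auto simp: algebra_simps)
    also have "\<dots> = lam s * g (a1 s) + (1 - lam s) * g (a2 s)"
      by (simp add: sum.distrib sum_distrib_left[symmetric] sum.delta')
    finally show ?thesis .
  qed
  have "stoch_policy \<mu>"
    unfolding stoch_policy_def
  proof (intro conjI allI)
    fix s a show "0 \<le> \<mu> s a" unfolding \<mu>_def using lam01[of s] by auto
  next
    fix s show "(\<Sum>a\<in>UNIV. \<mu> s a) = 1" using sum_mu[of s "\<lambda>_. 1"] by simp
  qed
  moreover have "Pimat \<mu> *v (Phi *v (\<theta> - \<theta>')) = Vtheta Phi \<theta> - Vtheta Phi \<theta>'"
    unfolding vec_eq_iff
  proof
    fix s
    have "(Pimat \<mu> *v (Phi *v (\<theta> - \<theta>'))) $ s = (\<Sum>a\<in>UNIV. \<mu> s a * u s a)"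
      unfolding Pimat_mv by (simp add: Phi_mv u_def)
    also have "\<dots> = D s" using sum_mu[of s "u s"] lamD[of s] by simp
    finally show "(Pimat \<mu> *v (Phi *v (\<theta> - \<theta>'))) $ s = (Vtheta Phi \<theta> - Vtheta Phi \<theta>') $ s"
      unfolding D_def by simp
  qed
  ultimately show ?thesis by blast
qed

lemma Talpha_diff:
  assumes "Pimat \<mu> *v (Phi *v (\<theta> - \<theta>')) = Vtheta Phi \<theta> - Vtheta Phi \<theta>'"
  shows "Talpha P r \<gamma> Phi d \<alpha> \<theta> - Talpha P r \<gamma> Phi d \<alpha> \<theta>' = Amat P \<gamma> Phi d \<alpha> \<mu> *v (\<theta> - \<theta>')"
proof -
  have "Talpha P r \<gamma> Phi d \<alpha> \<theta> - Talpha P r \<gamma> Phi d \<alpha> \<theta>'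
     = (\<theta> - \<theta>') - \<alpha> *\<^sub>R (transpose Phi *v (Dmat d *v (Phi *v (\<theta> - \<theta>'))))
       + (\<alpha> * \<gamma>) *\<^sub>R (transpose Phi *v (Dmat d *v (Pmat P *v (Vtheta Phi \<theta> - Vtheta Phi \<theta>'))))"
    unfolding Talpha_def gres_def by (simp add: algebra_simps)
  also have "\<dots> = Amat P \<gamma> Phi d \<alpha> \<mu> *v (\<theta> - \<theta>')"
    unfolding Amat_mv assms by (simp add: matrix_vector_mul_assoc matrix_mul_assoc)
  finally show ?thesis .
qed



theorem theorem1:
  fixes P :: "'s::finite \<Rightarrow> 'a::finite \<Rightarrow> 's \<Rightarrow> real"
    and r :: "'s \<Rightarrow> 'a \<Rightarrow> 's \<Rightarrow> real"
    and \<gamma> \<alpha> \<epsilon> :: real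
    and Phi :: "real^'m::finite^('s \<times> 'a)"
    and d :: "'s \<times> 'a \<Rightarrow> real"
  assumes P_nonneg: "\<forall>s a s'. 0 \<le> P s a s'"
    and P_sum: "\<forall>s a. (\<Sum>s'\<in>UNIV. P s a s') = 1"
    and gamma: "0 < \<gamma>" "\<gamma> < 1"
    and Phi_rank: "rank Phi = CARD('m)"
    and d_pos: "\<forall>sa. 0 < d sa"
    and d_sum: "(\<Sum>sa\<in>UNIV. d sa) = 1"
    and alpha: "0 < \<alpha>" "\<alpha> < 1"
    and jsr: "JSR (Aset P \<gamma> Phi d \<alpha>) < 1"
    and eps: "0 < \<epsilon>" "JSR (Aset P \<gamma> Phi d \<alpha>) + \<epsilon> < 1"
  shows "let \<beta> = JSR (Aset P \<gamma> Phi d \<alpha>) + \<epsilon>;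
             V = Vinf P \<gamma> Phi d \<alpha> \<beta>;
             p = (\<lambda>x. sqrt (V x));
             T = Talpha P r \<gamma> Phi d \<alpha>;
             g = gres P r \<gamma> Phi d
         in (\<forall>x. convergent (\<lambda>t. Vt P \<gamma> Phi d \<alpha> \<beta> t x))
          \<and> (\<exists>C\<ge>1.
                (\<forall>x. (norm x)\<^sup>2 \<le> V x \<and> V x \<le> C * (norm x)\<^sup>2)
              \<and> (\<forall>\<theta>s \<theta>0. g \<theta>s = 0 \<longrightarrow> (\<forall>k.
                     V ((T ^^ k) \<theta>0 - \<theta>s) \<le> \<beta> ^ (2 * k) * V (\<theta>0 - \<theta>s)
                   \<and> norm ((T ^^ k) \<theta>0 - \<theta>s) \<le> sqrt C * \<beta> ^ k * norm (\<theta>0 - \<theta>s)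
                   \<and> norm (Phi *v (T ^^ k) \<theta>0 - Phi *v \<theta>s)
                       \<le> onorm (\<lambda>y. Phi *v y) * sqrt C * \<beta> ^ k * norm (\<theta>0 - \<theta>s))))
          \<and> is_norm p
          \<and> (\<forall>\<mu> x. stoch_policy \<mu> \<longrightarrow>
                V (Amat P \<gamma> Phi d \<alpha> \<mu> *v x) \<le> \<beta>\<^sup>2 * (V x - (norm x)\<^sup>2)
              \<and> \<beta>\<^sup>2 * (V x - (norm x)\<^sup>2) \<le> \<beta>\<^sup>2 * V x
              \<and> p (Amat P \<gamma> Phi d \<alpha> \<mu> *v x) \<le> \<beta> * p x)
          \<and> (\<forall>\<theta> \<theta>'. p (T \<theta> - T \<theta>') \<le> \<beta> * p (\<theta> - \<theta>'))
          \<and> (\<exists>!\<theta>s. g \<theta>s = 0)"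
proof -
  define \<beta> where "\<beta> = JSR (Aset P \<gamma> Phi d \<alpha>) + \<epsilon>"
  define Af where "Af = (\<lambda>\<pi>::'s \<Rightarrow> 'a. Amat P \<gamma> Phi d \<alpha> (det_policy \<pi>))"
  define T where "T = Talpha P r \<gamma> Phi d \<alpha>"
  define g where "g = gres P r \<gamma> Phi d"
  define V where "V = Vs Af \<beta>"
  have HA: "Aset P \<gamma> Phi d \<alpha> = range Af" unfolding Aset_def Af_def by simp
  have Hfin: "finite (range Af)" by simp
  have Hne: "range Af \<noteq> {}" by simp
  have jsr0: "0 \<le> JSR (range Af)" by (rule JSR_nonneg[OF Hfin Hne])
  have b0: "0 < \<beta>" and b1: "\<beta> < 1" using jsr0 eps unfolding \<beta>_def HA by auto
  obtain K c where c0: "0 < c" and cb: "c < \<beta>" and K0: "0 < K" and aK: "\<forall>n. anorm (range Af) n \<le> K * c^n"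
    using JSR_bound[OF Hfin Hne, of \<beta>] eps unfolding \<beta>_def HA by auto
  note ctx = b0 c0 cb K0 aK
  obtain C where C1: "1 \<le> C" and VC: "\<forall>x. V x \<le> C * (norm x)\<^sup>2"
    using Cst_ge1[OF ctx] Vs_upper[OF ctx] unfolding V_def by blast
  have Vlow: "(norm x)\<^sup>2 \<le> V x" for x unfolding V_def by (rule Vs_lower[OF ctx])
  have V0: "0 \<le> V x" for x unfolding V_def by (rule Vs_nonneg[OF ctx])
  have Vt_eq: "Vt P \<gamma> Phi d \<alpha> \<beta> t x = (\<Sum>l\<le>t. fterm Af \<beta> l x)" for t x
    unfolding Vt_def fterm_def Ql_def Af_def ..
  have Vpart: "(\<lambda>t. Vt P \<gamma> Phi d \<alpha> \<beta> t x) \<longlonglongrightarrow> V x" for x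
    unfolding Vt_eq V_def by (rule Vs_partial[OF ctx])
  have Vinf_eq: "Vinf P \<gamma> Phi d \<alpha> \<beta> = V"
    by (rule ext) (unfold Vinf_def, rule limI[OF Vpart])
  have stepV: "V (Amat P \<gamma> Phi d \<alpha> \<mu> *v x) \<le> \<beta>\<^sup>2 * (V x - (norm x)\<^sup>2)" if mu: "stoch_policy \<mu>" for \<mu> x
  proof -
    have mu1: "\<forall>t. (\<Sum>a\<in>UNIV. \<mu> t a) = 1" and mu0: "\<forall>s a. 0 \<le> \<mu> s a" using mu unfolding stoch_policy_def by auto
    have "Ql Af l (Amat P \<gamma> Phi d \<alpha> \<mu> *v x) \<le> Ql Af (Suc l) x" for l
    proof (rule Ql_step)
      show "\<forall>\<pi>. 0 \<le> (\<Prod>t\<in>UNIV. \<mu> t (\<pi> t))" using mu0 by (auto intro: prod_nonneg)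
      show "(\<Sum>\<pi>\<in>UNIV. (\<Prod>t\<in>UNIV. \<mu> t (\<pi> t))) = 1" by (rule weights_sum[OF mu1])
      show "Amat P \<gamma> Phi d \<alpha> \<mu> *v x = (\<Sum>\<pi>\<in>UNIV. (\<Prod>t\<in>UNIV. \<mu> t (\<pi> t)) *\<^sub>R (Af \<pi> *v x))"
        unfolding Af_def by (rule Amat_decomp[OF mu1])
    qed
    thus ?thesis unfolding V_def by (intro Vs_step[OF ctx]) auto
  qed
  have stepV2: "\<beta>\<^sup>2 * (V x - (norm x)\<^sup>2) \<le> \<beta>\<^sup>2 * V x" for x
    by (intro mult_left_mono) auto
  have contrV: "V (T \<theta> - T \<theta>') \<le> \<beta>\<^sup>2 * V (\<theta> - \<theta>')" for \<theta> \<theta>'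
  proof -
    obtain \<mu> where mu: "stoch_policy \<mu>" and e: "Pimat \<mu> *v (Phi *v (\<theta> - \<theta>')) = Vtheta Phi \<theta> - Vtheta Phi \<theta>'"
      using contraction_policy by blast
    have "T \<theta> - T \<theta>' = Amat P \<gamma> Phi d \<alpha> \<mu> *v (\<theta> - \<theta>')" unfolding T_def by (rule Talpha_diff[OF e])
    thus ?thesis using stepV[OF mu, of "\<theta> - \<theta>'"] stepV2[of "\<theta> - \<theta>'"] by simp
  qed
  have iterV: "V ((T ^^ k) a - (T ^^ k) b) \<le> \<beta> ^ (2 * k) * V (a - b)" for k a b
  proof (induction k)
    case 0 thus ?case by simp
  next
    case (Suc k)
    have "V ((T ^^ Suc k) a - (T ^^ Suc k) b) \<le> \<beta>\<^sup>2 * V ((T ^^ k) a - (T ^^ k) b)"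
      using contrV by simp
    also have "\<dots> \<le> \<beta>\<^sup>2 * (\<beta> ^ (2 * k) * V (a - b))" using Suc by (intro mult_left_mono) auto
    also have "\<dots> = \<beta> ^ (2 * Suc k) * V (a - b)" by (simp add: power_add power2_eq_square)
    finally show ?case .
  qed
  have normit: "norm ((T ^^ k) a - (T ^^ k) b) \<le> sqrt C * \<beta> ^ k * norm (a - b)" for k a b
  proof -
    have "(norm ((T ^^ k) a - (T ^^ k) b))\<^sup>2 \<le> \<beta> ^ (2 * k) * V (a - b)"
      using Vlow iterV order_trans by blast
    also have "\<dots> \<le> \<beta> ^ (2 * k) * (C * (norm (a - b))\<^sup>2)" using VC b0 by (intro mult_left_mono) auto
    also have "\<dots> = (sqrt C * \<beta> ^ k * norm (a - b))\<^sup>2" using C1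
      by (simp add: power_mult_distrib power_mult[symmetric] mult.commute mult.left_commute)
    finally show ?thesis by (rule power2_le_imp_le) (use C1 b0 in auto)
  qed
  have gT: "g \<theta> = 0 \<longleftrightarrow> T \<theta> = \<theta>" for \<theta>
    unfolding g_def T_def Talpha_def using alpha by auto
  have uniq: "a = b" if "T a = a" "T b = b" for a b
  proof -
    have "V (a - b) \<le> \<beta>\<^sup>2 * V (a - b)" using contrV[of a b] that by simp
    moreover have "\<beta>\<^sup>2 < 1" using b0 b1 by (simp add: power_less_one_iff)
    ultimately have "V (a - b) = 0" using V0[of "a - b"]
      by (metis le_less_trans mult_le_cancel_right1 not_less order.eq_iff)
    thus ?thesis unfolding V_def using Vs_zero_iff[OF ctx] by simp
  qed
  have exist: "\<exists>z. T z = z"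
  proof -
    have sC: "0 < sqrt C" using C1 by simp
    obtain N where N: "\<beta> ^ N < 1 / sqrt C" using real_arch_pow_inv[of "1 / sqrt C" \<beta>] sC b1 by auto
    have lt: "sqrt C * \<beta> ^ N < 1" using N sC by (simp add: field_simps)
    have "\<exists>!z. (T ^^ N) z = z"
      by (rule banach_fix_type[of "sqrt C * \<beta> ^ N"]) (use lt sC b0 normit in \<open>auto simp: dist_norm\<close>)
    then obtain z where z: "(T ^^ N) z = z" and zu: "\<And>y. (T ^^ N) y = y \<Longrightarrow> y = z" by blast
    have "(T ^^ N) (T z) = T z" using z by (metis funpow_swap1)
    hence "T z = z" by (rule zu)
    thus ?thesis by blast
  qed
  have part1: "\<forall>x. convergent (\<lambda>t. Vt P \<gamma> Phi d \<alpha> \<beta> t x)" using Vpart convergentI by blast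
  have part2: "\<forall>\<theta>s \<theta>0. g \<theta>s = 0 \<longrightarrow> (\<forall>k.
                     V ((T ^^ k) \<theta>0 - \<theta>s) \<le> \<beta> ^ (2 * k) * V (\<theta>0 - \<theta>s)
                   \<and> norm ((T ^^ k) \<theta>0 - \<theta>s) \<le> sqrt C * \<beta> ^ k * norm (\<theta>0 - \<theta>s)
                   \<and> norm (Phi *v (T ^^ k) \<theta>0 - Phi *v \<theta>s)
                       \<le> onorm (\<lambda>y. Phi *v y) * sqrt C * \<beta> ^ k * norm (\<theta>0 - \<theta>s))"
  proof (intro allI impI conjI)
    fix \<theta>s \<theta>0 k assume "g \<theta>s = 0"
    hence fx: "(T ^^ k) \<theta>s = \<theta>s" for k using gT by (induction k) auto
    show "V ((T ^^ k) \<theta>0 - \<theta>s) \<le> \<beta> ^ (2 * k) * V (\<theta>0 - \<theta>s)" using iterV[of k \<theta>0 \<theta>s] fx by simp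
    have nb: "norm ((T ^^ k) \<theta>0 - \<theta>s) \<le> sqrt C * \<beta> ^ k * norm (\<theta>0 - \<theta>s)" using normit[of k \<theta>0 \<theta>s] fx by simp
    thus "norm ((T ^^ k) \<theta>0 - \<theta>s) \<le> sqrt C * \<beta> ^ k * norm (\<theta>0 - \<theta>s)" .
    have "norm (Phi *v (T ^^ k) \<theta>0 - Phi *v \<theta>s) = norm (Phi *v ((T ^^ k) \<theta>0 - \<theta>s))"
      by (simp add: matrix_vector_mult_diff_distrib)
    also have "\<dots> \<le> onorm (\<lambda>y. Phi *v y) * norm ((T ^^ k) \<theta>0 - \<theta>s)" by (rule onorm) simp
    also have "\<dots> \<le> onorm (\<lambda>y. Phi *v y) * (sqrt C * \<beta> ^ k * norm (\<theta>0 - \<theta>s))"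
      by (rule mult_left_mono[OF nb]) (rule onorm_pos_le, simp)
    finally show "norm (Phi *v (T ^^ k) \<theta>0 - Phi *v \<theta>s) \<le> onorm (\<lambda>y. Phi *v y) * sqrt C * \<beta> ^ k * norm (\<theta>0 - \<theta>s)"
      by (simp add: mult.assoc)
  qed
  have part3: "is_norm (\<lambda>x. sqrt (V x))"
    unfolding is_norm_def
  proof (intro conjI allI)
    fix x show "0 \<le> sqrt (V x)" using V0 by simp
    show "sqrt (V x) = 0 \<longleftrightarrow> x = 0" unfolding V_def using Vs_zero_iff[OF ctx] by simp
  next
    fix a x show "sqrt (V (a *\<^sub>R x)) = \<bar>a\<bar> * sqrt (V x)"
      unfolding V_def Vs_scale[OF ctx] by (simp add: real_sqrt_mult)
  next
    fix x y show "sqrt (V (x + y)) \<le> sqrt (V x) + sqrt (V y)" unfolding V_def by (rule Vs_triangle[OF ctx])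
  qed
  have part4: "\<forall>\<mu> x. stoch_policy \<mu> \<longrightarrow>
                V (Amat P \<gamma> Phi d \<alpha> \<mu> *v x) \<le> \<beta>\<^sup>2 * (V x - (norm x)\<^sup>2)
              \<and> \<beta>\<^sup>2 * (V x - (norm x)\<^sup>2) \<le> \<beta>\<^sup>2 * V x
              \<and> sqrt (V (Amat P \<gamma> Phi d \<alpha> \<mu> *v x)) \<le> \<beta> * sqrt (V x)"
  proof (intro allI impI conjI)
    fix \<mu> :: "'s \<Rightarrow> 'a \<Rightarrow> real" and x :: "real^'m" assume mu: "stoch_policy \<mu>"
    show "V (Amat P \<gamma> Phi d \<alpha> \<mu> *v x) \<le> \<beta>\<^sup>2 * (V x - (norm x)\<^sup>2)" by (rule stepV[OF mu])
    show "\<beta>\<^sup>2 * (V x - (norm x)\<^sup>2) \<le> \<beta>\<^sup>2 * V x" by (rule stepV2)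
    have "V (Amat P \<gamma> Phi d \<alpha> \<mu> *v x) \<le> \<beta>\<^sup>2 * V x" using stepV[OF mu] stepV2 order_trans by blast
    hence "sqrt (V (Amat P \<gamma> Phi d \<alpha> \<mu> *v x)) \<le> sqrt (\<beta>\<^sup>2 * V x)" by (rule real_sqrt_le_mono)
    thus "sqrt (V (Amat P \<gamma> Phi d \<alpha> \<mu> *v x)) \<le> \<beta> * sqrt (V x)" using b0 by (simp add: real_sqrt_mult)
  qed
  have part5: "\<forall>\<theta> \<theta>'. sqrt (V (T \<theta> - T \<theta>')) \<le> \<beta> * sqrt (V (\<theta> - \<theta>'))"
  proof (intro allI)
    fix \<theta> \<theta>'
    have "sqrt (V (T \<theta> - T \<theta>')) \<le> sqrt (\<beta>\<^sup>2 * V (\<theta> - \<theta>'))" by (rule real_sqrt_le_mono[OF contrV])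
    thus "sqrt (V (T \<theta> - T \<theta>')) \<le> \<beta> * sqrt (V (\<theta> - \<theta>'))" using b0 by (simp add: real_sqrt_mult)
  qed
  have part6: "\<exists>!\<theta>s. g \<theta>s = 0" using exist uniq gT by blast
  show ?thesis
    unfolding Let_def \<beta>_def[symmetric] Vinf_eq T_def[symmetric] g_def[symmetric]
    using part1 part2 part3 part4 part5 part6 C1 VC Vlow by blast
qed


end
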